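(* For all positive integers $n$ and $k$, \[ |\mathrm{Hom}(P_n,P_k)| \;=\; k\cdot 2^{n-1} \;-\; \sum_{i=0}^{n-2} 2^{\,n-1-i}\sum_{j\in\mathbb Z}\left(\binom{i}{\lceil i/2\rceil - j(k+1)} - \binom{i}{\lfloor (i+k+1)/2\rfloor - j(k+1)}\right). \]
   Context: All graphs are finite, undirected, without loops or multiple edges. For a positive integer $m$, $P_m$ denotes the path with vertex set $[m]=\{1,\dots,m\}$ in which $i$ and $j$ are adjacent iff $|i-j|=1$. A homomorphism $G\to H$ is a map $f:V(G)\to V(H)$ sending adjacent vertices to adjacent vertices; $\mathrm{Hom}(G,H)$ is the set of such maps. Convention: $\binom{a}{b}=0$ if $b<0$ or $b>a$ (so each inner sum over $j$ is finite). *)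

theory Defs
  imports Complex_Main "HOL-Library.FuncSet"
begin

type_synonym 'a graph = "'a set \<times> ('a \<Rightarrow> 'a \<Rightarrow> bool)"

definition verts :: "'a graph \<Rightarrow> 'a set" where "verts G = fst G"
definition adj :: "'a graph \<Rightarrow> 'a \<Rightarrow> 'a \<Rightarrow> bool" where "adj G = snd G"

definition path_graph :: "nat \<Rightarrow> nat graph" where
  "path_graph m = ({1..m}, \<lambda>i j. \<bar>int i - int j\<bar> = 1)"

definition Hom :: "'a graph \<Rightarrow> 'b graph \<Rightarrow> ('a \<Rightarrow> 'b) set" where
  "Hom G H = {f \<in> verts G \<rightarrow>\<^sub>E verts H.
      \<forall>x\<in>verts G. \<forall>y\<in>verts G. adj G x y \<longrightarrow> adj H (f x) (f y)}"

definition binom_int :: "nat \<Rightarrow> int \<Rightarrow> int" where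
  "binom_int a b = (if 0 \<le> b \<and> b \<le> int a then int (a choose nat b) else 0)"

definition sum_Z :: "(int \<Rightarrow> int) \<Rightarrow> int" where
  "sum_Z f = sum f {j. f j \<noteq> 0}"

end

theory Submission imports Defs begin
lemma sumZ_eq: "finite J \<Longrightarrow> {j. f j \<noteq> 0} \<subseteq> J \<Longrightarrow> sum_Z f = sum f J"
  unfolding sum_Z_def by (auto intro: sum.mono_neutral_left)

lemma sumZ_bij: assumes "bij g" shows "sum_Z (\<lambda>j. f (g j)) = sum_Z f"
proof -
  have e: "g ` {j. f (g j) \<noteq> 0} = {x. f x \<noteq> 0}"
    using assms by (auto simp: bij_def surj_def)
  have "inj_on g {j. f (g j) \<noteq> 0}" using assms by (simp add: bij_def inj_on_def inj_def)
  then have "sum f (g ` {j. f (g j) \<noteq> 0}) = sum (f \<circ> g) {j. f (g j) \<noteq> 0}"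
    by (rule sum.reindex)
  then show ?thesis unfolding sum_Z_def e by (simp add: comp_def)
qed

lemma sumZ_add: assumes "finite {j. f j \<noteq> 0}" "finite {j. g j \<noteq> 0}"
  shows "sum_Z (\<lambda>j. f j + g j) = sum_Z f + sum_Z g"
proof -
  let ?J = "{j. f j \<noteq> 0} \<union> {j. g j \<noteq> 0}"
  have "sum_Z (\<lambda>j. f j + g j) = sum (\<lambda>j. f j + g j) ?J" by (rule sumZ_eq) (use assms in auto)
  moreover have "sum_Z f = sum f ?J" by (rule sumZ_eq) (use assms in auto)
  moreover have "sum_Z g = sum g ?J" by (rule sumZ_eq) (use assms in auto)
  ultimately show ?thesis by (simp add: sum.distrib)
qed

lemma sumZ_diff: assumes "finite {j. f j \<noteq> 0}" "finite {j. g j \<noteq> 0}"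
  shows "sum_Z (\<lambda>j. f j - g j) = sum_Z f - sum_Z g"
proof -
  let ?J = "{j. f j \<noteq> 0} \<union> {j. g j \<noteq> 0}"
  have "sum_Z (\<lambda>j. f j - g j) = sum (\<lambda>j. f j - g j) ?J" by (rule sumZ_eq) (use assms in auto)
  moreover have "sum_Z f = sum f ?J" by (rule sumZ_eq) (use assms in auto)
  moreover have "sum_Z g = sum g ?J" by (rule sumZ_eq) (use assms in auto)
  ultimately show ?thesis by (simp add: sum_subtractf)
qed

lemma binom_fin: "finite {j. binom_int i (m - j * (int k + 1)) \<noteq> 0}"
proof (rule finite_subset)
  show "{j. binom_int i (m - j * (int k + 1)) \<noteq> 0} \<subseteq> {-(\<bar>m\<bar> + int i)..\<bar>m\<bar> + int i}"
  proof
    fix j assume "j \<in> {j. binom_int i (m - j * (int k + 1)) \<noteq> 0}"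
    then have h: "0 \<le> m - j * (int k + 1)" "m - j * (int k + 1) \<le> int i"
      by (auto simp: binom_int_def split: if_splits)
    show "j \<in> {-(\<bar>m\<bar> + int i)..\<bar>m\<bar> + int i}"
    proof (cases "j \<ge> 0")
      case True
      then have "j * int k \<ge> 0" by simp
      moreover have "j*(int k+1) = j*int k + j" by (simp add: algebra_simps)
      ultimately show ?thesis using h True by (simp only: atLeastAtMost_iff) linarith
    next
      case False
      then have "j * int k \<le> 0" by (simp add: mult_nonpos_nonneg)
      moreover have "j*(int k+1) = j*int k + j" by (simp add: algebra_simps)
      ultimately show ?thesis using h False by (simp only: atLeastAtMost_iff) linarith
    qed
  qed
qed simp

lemma binom_pascal: "binom_int (Suc i) t = binom_int i t + binom_int i (t - 1)"
proof -
  consider "t < 0" | "t = 0" | "0 < t \<and> t \<le> int i" | "t = int i + 1" | "t > int i + 1" by linarith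
  then show ?thesis
  proof cases
    case 3
    then have "nat t = Suc (nat (t - 1))" by linarith
    then show ?thesis using 3 by (simp add: binom_int_def)
  next
    case 4
    then have "nat t = Suc i" "nat (t-1) = i" by auto
    then show ?thesis using 4 by (simp add: binom_int_def)
  qed (auto simp: binom_int_def)
qed

lemma binom_sym: "binom_int i (int i - t) = binom_int i t"
proof (cases "0 \<le> t \<and> t \<le> int i")
  case True
  then have "nat (int i - t) = i - nat t" by auto
  moreover have "nat t \<le> i" using True by linarith
  then have "i choose (i - nat t) = i choose nat t" using binomial_symmetric[of "nat t" i] by simp
  ultimately show ?thesis using True by (simp add: binom_int_def)
qed (auto simp: binom_int_def)

definition G :: "nat \<Rightarrow> nat \<Rightarrow> int \<Rightarrow> int" where
  "G k i m = sum_Z (\<lambda>j. binom_int i (m - j * (int k + 1)))"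

lemma G_pascal: "G k (Suc i) m = G k i m + G k i (m - 1)"
proof -
  have "G k (Suc i) m = sum_Z (\<lambda>j. binom_int i (m - j * (int k + 1)) + binom_int i (m - 1 - j * (int k + 1)))"
    unfolding G_def by (simp add: binom_pascal algebra_simps)
  also have "\<dots> = G k i m + G k i (m - 1)" unfolding G_def by (rule sumZ_add) (rule binom_fin)+
  finally show ?thesis .
qed

lemma G_sym: "G k i (int i - m) = G k i m"
proof -
  have "G k i (int i - m) = sum_Z (\<lambda>j. binom_int i (m - (- j) * (int k + 1)))"
    unfolding G_def using binom_sym[of i "m + _ * (int k + 1)"]
    by (simp add: algebra_simps)
  also have "\<dots> = G k i m" unfolding G_def
    by (rule sumZ_bij[where g = uminus and f = "\<lambda>j. binom_int i (m - j * (int k + 1))"])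
       (rule bij_betwI[where g=uminus], auto)
  finally show ?thesis .
qed

lemma G_per: "G k i (m + (int k + 1)) = G k i m"
proof -
  have "G k i (m + (int k + 1)) = sum_Z (\<lambda>j. binom_int i (m - (j - 1) * (int k + 1)))"
    unfolding G_def by (simp add: algebra_simps)
  also have "\<dots> = G k i m" unfolding G_def
    by (rule sumZ_bij[where g = "\<lambda>j. j - 1" and f = "\<lambda>j. binom_int i (m - j * (int k + 1))"])
       (rule bij_betwI[where g="\<lambda>j. j + 1"], auto)
  finally show ?thesis .
qed

lemma G_base: assumes "0 \<le> m" "m \<le> int k" shows "G k 0 m = (if m = 0 then 1 else 0)"
proof -
  have "G k 0 m = sum (\<lambda>j. binom_int 0 (m - j * (int k + 1))) {0}"
    unfolding G_def
  proof (rule sumZ_eq)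
    show "{j. binom_int 0 (m - j * (int k + 1)) \<noteq> 0} \<subseteq> {0}"
    proof
      fix j assume "j \<in> {j. binom_int 0 (m - j * (int k + 1)) \<noteq> 0}"
      then have e: "m = j * (int k + 1)" by (auto simp: binom_int_def split: if_splits)
      show "j \<in> {0}"
      proof (rule ccontr)
        assume "j \<notin> {0}"
        then have "j \<ge> 1 \<or> j \<le> -1" by auto
        then show False
        proof
          assume "j \<ge> 1" then have "j * int k \<ge> 1 * int k" by (intro mult_right_mono) auto
          then show False using e assms \<open>j \<ge> 1\<close> by (simp add: algebra_simps)
        next
          assume "j \<le> -1" then have "j * int k \<le> 0" by (simp add: mult_nonpos_nonneg)
          then show False using e assms \<open>j \<le> -1\<close> by (simp add: algebra_simps)
        qed
      qed
    qed
  qed simp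
  then show ?thesis by (simp add: binom_int_def)
qed

definition A :: "nat \<Rightarrow> nat \<Rightarrow> int \<Rightarrow> int" where
  "A k i m = G k i m - G k i (m + 1)"

lemma A_pascal: "A k (Suc i) m = A k i m + A k i (m - 1)"
  unfolding A_def G_pascal by simp

lemma A_zero1: assumes "2 * m = int i - 1" shows "A k i m = 0"
proof -
  have "int i - m = m + 1" using assms by simp
  then show ?thesis unfolding A_def using G_sym[of k i m] by simp
qed

lemma A_zero2: assumes "2 * m = int i + int k" shows "A k i m = 0"
proof -
  have "G k i (m + 1) = G k i (int i - (m + 1))" using G_sym[of k i "m+1"] by simp
  also have "\<dots> = G k i (int i - (m + 1) + (int k + 1))" by (rule G_per[symmetric])
  also have "int i - (m + 1) + (int k + 1) = m" using assms by simp
  finally show ?thesis unfolding A_def by simp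
qed

definition Top :: "nat \<Rightarrow> (int \<Rightarrow> int) \<Rightarrow> int \<Rightarrow> int" where
  "Top k h v = (if 1 \<le> v \<and> v \<le> int k then h (v - 1) + h (v + 1) else 0)"

definition supp :: "nat \<Rightarrow> (int \<Rightarrow> int) \<Rightarrow> bool" where
  "supp k h = (\<forall>v. (v < 1 \<or> v > int k) \<longrightarrow> h v = 0)"

definition ip :: "nat \<Rightarrow> (int \<Rightarrow> int) \<Rightarrow> (int \<Rightarrow> int) \<Rightarrow> int" where
  "ip k g h = (\<Sum>v\<in>{1..int k}. g v * h v)"

lemma supp_Top: "supp k (Top k h)"
  unfolding supp_def Top_def by auto

lemma supp_iter: "supp k g \<Longrightarrow> supp k ((Top k ^^ i) g)"
  by (induction i) (auto simp: supp_Top)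

lemma sum_shift_int: "(\<Sum>v\<in>{a..b::int}. f v) = (\<Sum>v\<in>{a-1..b-1}. f (v+1))"
  by (rule sum.reindex_bij_witness[where i="\<lambda>v. v+1" and j="\<lambda>v. v-1"]) auto

lemma shift_lemma:
  assumes g: "supp k g" and h: "supp k h"
  shows "(\<Sum>v\<in>{1..int k}. g (v - 1) * h v) = (\<Sum>v\<in>{1..int k}. g v * h (v + 1))"
proof -
  have g0: "g 0 = 0" and hk: "h (int k + 1) = 0" using g h unfolding supp_def by auto
  have "(\<Sum>v\<in>{1..int k}. g (v - 1) * h v) = (\<Sum>v\<in>{0..int k - 1}. g v * h (v + 1))"
    using sum_shift_int[of "\<lambda>v. g (v - 1) * h v" 1 "int k"] by simp
  also have "\<dots> = (\<Sum>v\<in>{0..int k}. g v * h (v + 1))"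
  proof -
    have "{0..int k} = insert (int k) {0..int k - 1}" by auto
    then show ?thesis by (simp add: hk)
  qed
  also have "\<dots> = (\<Sum>v\<in>{1..int k}. g v * h (v + 1))"
  proof -
    have "{0..int k} = insert 0 {1..int k}" by auto
    then show ?thesis by (simp add: g0)
  qed
  finally show ?thesis .
qed

lemma Top_sym:
  assumes g: "supp k g" and h: "supp k h"
  shows "ip k (Top k g) h = ip k g (Top k h)"
proof -
  have "ip k (Top k g) h = (\<Sum>v\<in>{1..int k}. g (v - 1) * h v) + (\<Sum>v\<in>{1..int k}. g (v + 1) * h v)"
    unfolding ip_def Top_def by (simp add: sum.distrib[symmetric] algebra_simps)
  moreover have "ip k g (Top k h) = (\<Sum>v\<in>{1..int k}. g v * h (v - 1)) + (\<Sum>v\<in>{1..int k}. g v * h (v + 1))"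
    unfolding ip_def Top_def by (simp add: sum.distrib[symmetric] algebra_simps)
  moreover have "(\<Sum>v\<in>{1..int k}. g (v - 1) * h v) = (\<Sum>v\<in>{1..int k}. g v * h (v + 1))"
    by (rule shift_lemma[OF g h])
  moreover have "(\<Sum>v\<in>{1..int k}. h (v - 1) * g v) = (\<Sum>v\<in>{1..int k}. h v * g (v + 1))"
    by (rule shift_lemma[OF h g])
  ultimately show ?thesis by (simp add: mult.commute)
qed

lemma iter_sym:
  assumes g: "supp k g" and h: "supp k h"
  shows "ip k ((Top k ^^ i) g) h = ip k g ((Top k ^^ i) h)"
  using h
proof (induction i arbitrary: h)
  case 0 then show ?case by simp
next
  case (Suc i)
  have "ip k ((Top k ^^ Suc i) g) h = ip k (Top k ((Top k ^^ i) g)) h" by simp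
  also have "\<dots> = ip k ((Top k ^^ i) g) (Top k h)"
    by (rule Top_sym[OF supp_iter[OF g] Suc.prems])
  also have "\<dots> = ip k g ((Top k ^^ i) (Top k h))" by (rule Suc.IH[OF supp_Top])
  also have "\<dots> = ip k g ((Top k ^^ Suc i) h)" by (metis comp_apply funpow_Suc_right)
  finally show ?case .
qed

definition ind :: "nat \<Rightarrow> int \<Rightarrow> int" where
  "ind k v = (if 1 \<le> v \<and> v \<le> int k then 1 else 0)"
definition e1 :: "int \<Rightarrow> int" where
  "e1 v = (if v = 1 then 1 else 0)"

definition cc :: "nat \<Rightarrow> nat \<Rightarrow> int \<Rightarrow> int" where
  "cc k i = (Top k ^^ i) (ind k)"
definition aa :: "nat \<Rightarrow> nat \<Rightarrow> int \<Rightarrow> int" where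
  "aa k i = (Top k ^^ i) e1"

lemma supp_ind: "supp k (ind k)" unfolding supp_def ind_def by auto
lemma supp_e1: "k \<ge> 1 \<Longrightarrow> supp k e1" unfolding supp_def e1_def by auto

lemma ip_e1: "k \<ge> 1 \<Longrightarrow> ip k f e1 = f 1"
  unfolding ip_def e1_def by (simp add: if_distrib cong: if_cong)

lemma ip_ind: "ip k (ind k) f = (\<Sum>v\<in>{1..int k}. f v)"
  unfolding ip_def ind_def by simp

lemma Top_ind: "v \<in> {1..int k} \<Longrightarrow> Top k (ind k) v = 2 - e1 v - (if v = int k then 1 else 0)"
  unfolding Top_def ind_def e1_def by auto

lemma sum_Top:
  assumes "k \<ge> 1" "supp k h"
  shows "(\<Sum>v\<in>{1..int k}. Top k h v) = 2 * (\<Sum>v\<in>{1..int k}. h v) - h 1 - h (int k)"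
proof -
  have "(\<Sum>v\<in>{1..int k}. Top k h v) = ip k (Top k h) (ind k)"
    unfolding ip_def ind_def by simp
  also have "\<dots> = ip k h (Top k (ind k))" by (rule Top_sym[OF assms(2) supp_ind])
  also have "\<dots> = (\<Sum>v\<in>{1..int k}. 2 * h v - h v * e1 v - (if v = int k then h v else 0))"
    unfolding ip_def by (rule sum.cong) (auto simp: Top_ind algebra_simps)
  also have "\<dots> = 2 * (\<Sum>v\<in>{1..int k}. h v) - (\<Sum>v\<in>{1..int k}. h v * e1 v) - h (int k)"
    using assms(1) by (simp add: sum_subtractf sum_distrib_left)
  also have "(\<Sum>v\<in>{1..int k}. h v * e1 v) = h 1" using ip_e1[OF assms(1), of h] by (simp add: ip_def)
  finally show ?thesis .
qed

lemma cc_Suc: "cc k (Suc i) = Top k (cc k i)" unfolding cc_def by simp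
lemma aa_Suc: "aa k (Suc i) = Top k (aa k i)" unfolding aa_def by simp

lemma cc_sym: "cc k i (int k + 1 - v) = cc k i v"
proof (induction i arbitrary: v)
  case 0 then show ?case by (auto simp: cc_def ind_def)
next
  case (Suc i)
  have a: "cc k i (int k + 1 - v - 1) = cc k i (v + 1)" using Suc.IH[of "v+1"] by (simp add: algebra_simps)
  have b: "cc k i (int k + 1 - v + 1) = cc k i (v - 1)" using Suc.IH[of "v-1"] by (simp add: algebra_simps)
  show ?case unfolding cc_Suc Top_def using a b by auto
qed

definition P :: "nat \<Rightarrow> nat \<Rightarrow> int \<Rightarrow> int" where
  "P k i v = (if even (int i + v - 1) then A k i ((int i + v - 1) div 2) else 0)"

lemma P0: "P k i 0 = 0"
proof (cases "even (int i + 0 - 1)")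
  case True
  then obtain m where m: "int i + 0 - 1 = 2 * m" by (rule evenE)
  then show ?thesis unfolding P_def using A_zero1[of m i k] by simp
qed (simp add: P_def)

lemma Pk: "P k i (int k + 1) = 0"
proof (cases "even (int i + (int k + 1) - 1)")
  case True
  then obtain m where m: "int i + (int k + 1) - 1 = 2 * m" by (rule evenE)
  then show ?thesis unfolding P_def using A_zero2[of m i k] by simp
qed (simp add: P_def)

lemma P_Suc: "P k (Suc i) v = P k i (v - 1) + P k i (v + 1)"
proof (cases "even (int i + v)")
  case True
  then obtain m where m: "int i + v = 2 * m" by (rule evenE)
  have "P k (Suc i) v = A k (Suc i) m" unfolding P_def using m True by simp
  moreover have "P k i (v - 1) = A k i (m - 1)" unfolding P_def using m True
    by (simp add: algebra_simps)
  moreover have "P k i (v + 1) = A k i m" unfolding P_def using m True by simp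
  ultimately show ?thesis by (simp add: A_pascal)
next
  case False
  then show ?thesis unfolding P_def by (auto simp: algebra_simps)
qed

lemma aa_closed:
  assumes "k \<ge> 1"
  shows "aa k i v = (if 1 \<le> v \<and> v \<le> int k then P k i v else 0)"
proof (induction i arbitrary: v)
  case 0
  show ?case
  proof (cases "1 \<le> v \<and> v \<le> int k")
    case True
    show ?thesis
    proof (cases "even (v - 1)")
      case ev: True
      then obtain m where m: "v - 1 = 2 * m" by (rule evenE)
      have "0 \<le> m" "m + 1 \<le> int k" using m True assms by linarith+
      then have "A k 0 m = (if m = 0 then 1 else 0)" unfolding A_def using G_base by simp
      then show ?thesis using True ev m by (auto simp: aa_def e1_def P_def)
    next
      case False
      then show ?thesis using True by (auto simp: aa_def e1_def P_def)
    qed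
  qed (use assms in \<open>auto simp: aa_def e1_def\<close>)
next
  case (Suc i)
  have x: "aa k i (v - 1) = P k i (v - 1)" if "1 \<le> v" "v \<le> int k"
    using Suc.IH[of "v - 1"] that P0 by (cases "v = 1") auto
  have y: "aa k i (v + 1) = P k i (v + 1)" if "1 \<le> v" "v \<le> int k"
    using Suc.IH[of "v + 1"] that Pk by (cases "v = int k") auto
  show ?case unfolding aa_Suc Top_def using x y P_Suc by auto
qed

lemma sum_telescope_nat: fixes f :: "int \<Rightarrow> int" shows
  "(\<Sum>m\<in>{lo..lo + int d - 1}. f m - f (m + 1)) = f lo - f (lo + int d)"
proof (induction d)
  case 0 then show ?case by simp
next
  case (Suc d)
  have "{lo..lo + int (Suc d) - 1} = insert (lo + int d) {lo..lo + int d - 1}" by auto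
  then show ?case using Suc by (simp add: algebra_simps)
qed

lemma sum_telescope_int: fixes f :: "int \<Rightarrow> int"
  assumes "lo \<le> hi + 1" shows "(\<Sum>m\<in>{lo..hi::int}. f m - f (m + 1)) = f lo - f (hi + 1)"
proof -
  obtain d where "hi + 1 = lo + int d" using assms by (metis zle_iff_zadd)
  then have h: "hi = lo + int d - 1" by simp
  show ?thesis unfolding h using sum_telescope_nat[of f lo d] by simp
qed

lemma sum_P:
  "(\<Sum>v\<in>{1..int k}. P k i v) = G k i ((int i + 1) div 2) - G k i ((int i + int k + 1) div 2)"
proof -
  let ?lo = "(int i + 1) div 2" and ?hi = "(int i + int k - 1) div 2"
  let ?h = "\<lambda>m. 2 * m - int i + 1"
  have img: "?h ` {?lo..?hi} \<subseteq> {1..int k}" by auto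
  have z: "\<forall>v\<in>{1..int k} - ?h ` {?lo..?hi}. P k i v = 0"
    proof
      fix v assume v: "v \<in> {1..int k} - ?h ` {?lo..?hi}"
      show "P k i v = 0"
      proof (rule ccontr)
        assume "P k i v \<noteq> 0"
        then have "even (int i + v - 1)" unfolding P_def by (auto split: if_splits)
        then obtain m where m: "int i + v - 1 = 2 * m" by (rule evenE)
        then have "v = ?h m" by simp
        moreover have "m \<in> {?lo..?hi}" using m v by auto
        ultimately show False using v by blast
      qed
    qed
  have "(\<Sum>v\<in>{1..int k}. P k i v) = (\<Sum>v\<in>?h ` {?lo..?hi}. P k i v)"
    by (rule sum.mono_neutral_right[OF _ img z]) simp
  also have "\<dots> = (\<Sum>m\<in>{?lo..?hi}. P k i (?h m))"
    by (subst sum.reindex) (auto simp: inj_on_def)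
  also have "\<dots> = (\<Sum>m\<in>{?lo..?hi}. A k i m - 0)"
    unfolding P_def by (rule sum.cong) auto
  also have "\<dots> = (\<Sum>m\<in>{?lo..?hi}. G k i m - G k i (m + 1))" unfolding A_def by simp
  also have "\<dots> = G k i ?lo - G k i (?hi + 1)" by (rule sum_telescope_int) auto
  also have "?hi + 1 = (int i + int k + 1) div 2" by simp
  finally show ?thesis .
qed

lemma hom_iff: "f \<in> Hom (path_graph m) (path_graph k) \<longleftrightarrow>
   f \<in> {1..m} \<rightarrow>\<^sub>E {1..k} \<and> (\<forall>x\<in>{1..m}. \<forall>y\<in>{1..m}. \<bar>int x - int y\<bar> = 1 \<longrightarrow> \<bar>int (f x) - int (f y)\<bar> = 1)"
  by (simp add: Hom_def verts_def adj_def path_graph_def)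

definition Hv :: "nat \<Rightarrow> nat \<Rightarrow> nat \<Rightarrow> (nat \<Rightarrow> nat) set" where
  "Hv k i v = {f \<in> Hom (path_graph (Suc i)) (path_graph k). f (Suc i) = v}"

lemma Hv_fin: "finite (Hv k i v)"
proof (rule finite_subset)
  show "Hv k i v \<subseteq> {1..Suc i} \<rightarrow>\<^sub>E {1..k}" unfolding Hv_def hom_iff by auto
qed (simp add: finite_PiE)

lemma Hv0: "int (card (Hv k 0 v)) = cc k 0 (int v)"
proof (cases "1 \<le> v \<and> v \<le> k")
  case True
  have "Hv k 0 v = {(\<lambda>x. if x = 1 then v else undefined)}"
  proof
    show "Hv k 0 v \<subseteq> {(\<lambda>x. if x = 1 then v else undefined)}"
    proof
      fix f assume f: "f \<in> Hv k 0 v"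
      then have "f \<in> {1..1} \<rightarrow>\<^sub>E {1..k}" "f 1 = v" unfolding Hv_def hom_iff by auto
      then have "f = (\<lambda>x. if x = 1 then v else undefined)" by (auto simp: PiE_def extensional_def)
      then show "f \<in> {(\<lambda>x. if x = 1 then v else undefined)}" by simp
    qed
  next
    show "{(\<lambda>x. if x = 1 then v else undefined)} \<subseteq> Hv k 0 v"
      using True unfolding Hv_def hom_iff by (auto simp: PiE_def extensional_def)
  qed
  then show ?thesis using True by (simp add: cc_def ind_def)
next
  case False
  have "Hv k 0 v = {}" using False unfolding Hv_def hom_iff by (auto simp: PiE_def Pi_def)
  then show ?thesis using False by (auto simp: cc_def ind_def)
qed

lemma Hv_bij:
  assumes v: "1 \<le> v" "v \<le> k"
  shows "bij_betw (\<lambda>f. restrict f {1..Suc i}) (Hv k (Suc i) v) (Hv k i (v - 1) \<union> Hv k i (v + 1))"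
  unfolding bij_betw_def
proof (intro conjI)
  show "inj_on (\<lambda>f. restrict f {1..Suc i}) (Hv k (Suc i) v)"
  proof (rule inj_onI)
    fix f g assume f: "f \<in> Hv k (Suc i) v" and g: "g \<in> Hv k (Suc i) v"
      and e: "restrict f {1..Suc i} = restrict g {1..Suc i}"
    show "f = g"
    proof
      fix x
      show "f x = g x"
      proof (cases "x \<in> {1..Suc i}")
        case True then show ?thesis using fun_cong[OF e, of x] by simp
      next
        case False
        show ?thesis
        proof (cases "x = Suc (Suc i)")
          case True then show ?thesis using f g unfolding Hv_def by simp
        next
          case False2: False
          then have "x \<notin> {1..Suc (Suc i)}" using False by auto
          then show ?thesis using f g unfolding Hv_def hom_iff by (auto simp: PiE_def extensional_def)
        qed
      qed
    qed
  qed
next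
  show "(\<lambda>f. restrict f {1..Suc i}) ` Hv k (Suc i) v = Hv k i (v - 1) \<union> Hv k i (v + 1)"
  proof
    show "(\<lambda>f. restrict f {1..Suc i}) ` Hv k (Suc i) v \<subseteq> Hv k i (v - 1) \<union> Hv k i (v + 1)"
    proof
      fix r assume "r \<in> (\<lambda>f. restrict f {1..Suc i}) ` Hv k (Suc i) v"
      then obtain f where f: "f \<in> Hv k (Suc i) v" and r: "r = restrict f {1..Suc i}" by auto
      have fP: "f \<in> {1..Suc (Suc i)} \<rightarrow>\<^sub>E {1..k}" and fv: "f (Suc (Suc i)) = v"
        and fa: "\<forall>x\<in>{1..Suc (Suc i)}. \<forall>y\<in>{1..Suc (Suc i)}. \<bar>int x - int y\<bar> = 1 \<longrightarrow> \<bar>int (f x) - int (f y)\<bar> = 1"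
        using f unfolding Hv_def hom_iff by auto
      have "\<bar>int (f (Suc i)) - int (f (Suc (Suc i)))\<bar> = 1" using fa by auto
      then have u: "f (Suc i) = v - 1 \<or> f (Suc i) = v + 1" using fv v by auto
      have rH: "r \<in> Hom (path_graph (Suc i)) (path_graph k)"
        unfolding hom_iff r using fP fa by (auto simp: PiE_def Pi_def)
      show "r \<in> Hv k i (v - 1) \<union> Hv k i (v + 1)"
        using u rH unfolding Hv_def r by auto
    qed
  next
    show "Hv k i (v - 1) \<union> Hv k i (v + 1) \<subseteq> (\<lambda>f. restrict f {1..Suc i}) ` Hv k (Suc i) v"
    proof
      fix g assume g: "g \<in> Hv k i (v - 1) \<union> Hv k i (v + 1)"
      then have gP: "g \<in> {1..Suc i} \<rightarrow>\<^sub>E {1..k}"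
        and ga: "\<forall>x\<in>{1..Suc i}. \<forall>y\<in>{1..Suc i}. \<bar>int x - int y\<bar> = 1 \<longrightarrow> \<bar>int (g x) - int (g y)\<bar> = 1"
        and gu: "g (Suc i) = v - 1 \<or> g (Suc i) = v + 1"
        unfolding Hv_def hom_iff by auto
      have gadj: "\<bar>int (g (Suc i)) - int v\<bar> = 1"
      proof -
        have "g (Suc i) \<in> {1..k}" using gP by auto
        then show ?thesis using gu v by auto
      qed
      define f where "f = g(Suc (Suc i) := v)"
      have fP: "f \<in> {1..Suc (Suc i)} \<rightarrow>\<^sub>E {1..k}"
        using gP v unfolding f_def by (auto simp: PiE_def Pi_def extensional_def)
      have fa: "\<forall>x\<in>{1..Suc (Suc i)}. \<forall>y\<in>{1..Suc (Suc i)}. \<bar>int x - int y\<bar> = 1 \<longrightarrow> \<bar>int (f x) - int (f y)\<bar> = 1"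
      proof (intro ballI impI)
        fix x y assume x: "x \<in> {1..Suc (Suc i)}" and y: "y \<in> {1..Suc (Suc i)}" and xy: "\<bar>int x - int y\<bar> = 1"
        consider "x \<le> Suc i \<and> y \<le> Suc i" | "x = Suc (Suc i) \<and> y = Suc i" | "x = Suc i \<and> y = Suc (Suc i)"
          using x y xy by fastforce
        then show "\<bar>int (f x) - int (f y)\<bar> = 1"
        proof cases
          case 1 then show ?thesis using ga x y xy unfolding f_def by auto
        next
          case 2 then show ?thesis using gadj unfolding f_def by auto
        next
          case 3 then show ?thesis using gadj unfolding f_def by auto
        qed
      qed
      have fH: "f \<in> Hv k (Suc i) v" unfolding Hv_def hom_iff using fP fa by (simp add: f_def)
      have "restrict f {1..Suc i} = g"
      proof
        fix x show "restrict f {1..Suc i} x = g x"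
          using gP unfolding f_def by (auto simp: PiE_def extensional_def)
      qed
      then show "g \<in> (\<lambda>f. restrict f {1..Suc i}) ` Hv k (Suc i) v" using fH by force
    qed
  qed
qed

lemma card_Hv: "int (card (Hv k i v)) = cc k i (int v)"
proof (induction i arbitrary: v)
  case 0 then show ?case by (rule Hv0)
next
  case (Suc i)
  show ?case
  proof (cases "1 \<le> v \<and> v \<le> k")
    case True
    have "card (Hv k (Suc i) v) = card (Hv k i (v - 1) \<union> Hv k i (v + 1))"
      using bij_betw_same_card[OF Hv_bij] True by blast
    also have "\<dots> = card (Hv k i (v - 1)) + card (Hv k i (v + 1))"
    proof (rule card_Un_disjoint)
      show "Hv k i (v - 1) \<inter> Hv k i (v + 1) = {}" unfolding Hv_def by auto
    qed (rule Hv_fin)+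
    finally have "int (card (Hv k (Suc i) v)) = cc k i (int (v - 1)) + cc k i (int (v + 1))"
      using Suc.IH by simp
    moreover have "int (v - 1) = int v - 1" using True by simp
    ultimately show ?thesis using True by (simp add: cc_Suc Top_def add.commute)
  next
    case False
    have "Hv k (Suc i) v = {}" using False unfolding Hv_def hom_iff by (auto simp: PiE_def Pi_def)
    then show ?thesis using False by (auto simp: cc_Suc Top_def)
  qed
qed

lemma card_Hom: "int (card (Hom (path_graph (Suc i)) (path_graph k))) = (\<Sum>v\<in>{1..int k}. cc k i v)"
proof -
  have U: "Hom (path_graph (Suc i)) (path_graph k) = (\<Union>v\<in>{1..k}. Hv k i v)"
    by (rule set_eqI) (auto simp: Hv_def hom_iff PiE_def Pi_def)
  have "card (\<Union>v\<in>{1..k}. Hv k i v) = (\<Sum>v\<in>{1..k}. card (Hv k i v))"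
    by (rule card_UN_disjoint) (auto simp: Hv_fin, auto simp: Hv_def)
  then have "int (card (Hom (path_graph (Suc i)) (path_graph k))) = (\<Sum>v\<in>{1..k}. cc k i (int v))"
    unfolding U by (simp add: card_Hv flip: card_Hv)
  also have "\<dots> = (\<Sum>v\<in>{1..int k}. cc k i v)"
    by (rule sum.reindex_bij_witness[where i=nat and j=int]) auto
  finally show ?thesis .
qed

definition S :: "nat \<Rightarrow> int \<Rightarrow> int" where
  "S k i = sum_Z (\<lambda>j. binom_int (nat i) (ceiling (real_of_int i / 2) - j * (int k + 1))
                  - binom_int (nat i) (floor (real_of_int (i + int k + 1) / 2) - j * (int k + 1)))"

lemma ceil_half: "ceiling (real_of_int x / 2) = (x + 1) div 2"
proof -
  have "ceiling (real_of_int x / 2) = - floor (real_of_int (- x) / real_of_int 2)"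
    by (simp add: ceiling_def)
  also have "\<dots> = - ((- x) div 2)" by (simp only: floor_divide_of_int_eq)
  also have "\<dots> = (x + 1) div 2" by presburger
  finally show ?thesis .
qed

lemma floor_half: "floor (real_of_int x / 2) = x div 2"
  using floor_divide_of_int_eq[of x 2] by simp

lemma S_eq: "S k (int i) = cc k i 1"
  and dummy: "True"
proof -
  have "S k (int i) = G k i ((int i + 1) div 2) - G k i ((int i + int k + 1) div 2)"
    unfolding S_def G_def ceil_half floor_half nat_int
    by (rule sumZ_diff) (rule binom_fin)+
  also have "\<dots> = (\<Sum>v\<in>{1..int k}. P k i v)" by (rule sum_P[symmetric])
  finally have 1: "S k (int i) = (\<Sum>v\<in>{1..int k}. P k i v)" .
  show "S k (int i) = cc k i 1"
  proof (cases "k \<ge> 1")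
    case True
    have "cc k i 1 = ip k (cc k i) e1" using ip_e1[OF True] by simp
    also have "\<dots> = ip k (ind k) (aa k i)" unfolding cc_def aa_def
      by (rule iter_sym[OF supp_ind supp_e1[OF True]])
    also have "\<dots> = (\<Sum>v\<in>{1..int k}. P k i v)" unfolding ip_ind
      by (rule sum.cong) (auto simp: aa_closed[OF True])
    finally show ?thesis using 1 by simp
  next
    case False
    then have "cc k i 1 = 0" by (cases i) (auto simp: cc_def ind_def Top_def)
    then show ?thesis using 1 False by simp
  qed
qed simp

lemma W_rec:
  assumes "k \<ge> 1"
  shows "(\<Sum>v\<in>{1..int k}. cc k (Suc i) v) = 2 * (\<Sum>v\<in>{1..int k}. cc k i v) - 2 * S k (int i)"
proof -
  have s: "supp k (cc k i)" unfolding cc_def by (rule supp_iter[OF supp_ind])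
  have "cc k i (int k) = cc k i 1" using cc_sym[of k i 1] by simp
  then show ?thesis unfolding cc_Suc using sum_Top[OF assms s] S_eq[of k i] by simp
qed

lemma W_closed:
  assumes "k \<ge> 1"
  shows "(\<Sum>v\<in>{1..int k}. cc k N v) = int k * 2 ^ N - (\<Sum>i<N. 2 ^ (N - i) * S k (int i))"
proof (induction N)
  case 0
  have "(\<Sum>v\<in>{1..int k}. cc k 0 v) = (\<Sum>v\<in>{1..int k}. 1)"
    by (rule sum.cong) (auto simp: cc_def ind_def)
  then show ?case by simp
next
  case (Suc N)
  have "(\<Sum>i<Suc N. 2 ^ (Suc N - i) * S k (int i)) = 2 * (\<Sum>i<N. 2 ^ (N - i) * S k (int i)) + 2 * S k (int N)"
  proof -
    have "(\<Sum>i<N. 2 ^ (Suc N - i) * S k (int i)) = (\<Sum>i<N. 2 * (2 ^ (N - i) * S k (int i)))"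
      by (rule sum.cong) (auto simp: Suc_diff_le)
    then show ?thesis by (simp add: sum_distrib_left)
  qed
  then show ?case using W_rec[OF assms, of N] Suc.IH by (simp add: algebra_simps)
qed

theorem theorem2:
  fixes n k :: nat
  assumes "n \<ge> 1" and "k \<ge> 1"
  shows "int (card (Hom (path_graph n) (path_graph k))) =
    int k * 2 ^ (n - 1)
    - (\<Sum>i = 0..int n - 2. 2 ^ nat (int n - 1 - i) *
        sum_Z (\<lambda>j. binom_int (nat i) (ceiling (real_of_int i / 2) - j * (int k + 1))
                  - binom_int (nat i) (floor (real_of_int (i + int k + 1) / 2) - j * (int k + 1))))"
proof -
  obtain N where n: "n = Suc N" using assms(1) by (cases n) auto
  have "(\<Sum>i = 0..int n - 2. 2 ^ nat (int n - 1 - i) *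
        sum_Z (\<lambda>j. binom_int (nat i) (ceiling (real_of_int i / 2) - j * (int k + 1))
                  - binom_int (nat i) (floor (real_of_int (i + int k + 1) / 2) - j * (int k + 1))))
      = (\<Sum>i = 0..int N - 1. 2 ^ nat (int N - i) * S k i)"
    unfolding S_def n by (rule sum.cong) (auto simp: algebra_simps)
  also have "\<dots> = (\<Sum>i<N. 2 ^ (N - i) * S k (int i))"
    by (rule sum.reindex_bij_witness[where i=int and j=nat]) (auto simp: nat_diff_distrib)
  finally have e: "(\<Sum>i = 0..int n - 2. 2 ^ nat (int n - 1 - i) *
        sum_Z (\<lambda>j. binom_int (nat i) (ceiling (real_of_int i / 2) - j * (int k + 1))
                  - binom_int (nat i) (floor (real_of_int (i + int k + 1) / 2) - j * (int k + 1))))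
      = (\<Sum>i<N. 2 ^ (N - i) * S k (int i))" .
  show ?thesis unfolding e using card_Hom[of N k] W_closed[OF assms(2), of N] n by simp
qed

end
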